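(* Let $T\in\mathcal M_n$, and let $f,g:[0,\infty)\to[0,\infty)$ be continuous with $f(t)g(t)=t$ for all $t\ge0$. Then \[\pm\mathfrak RT\le\Big(\frac{f^2(|T|)+f^2(|T^*|)}{2}\Big)\sharp\Big(\frac{g^2(|T|)+g^2(|T^*|)}{2}\Big)\quad\text{and}\quad \pm\mathfrak IT\le\Big(\frac{f^2(|T|)+f^2(|T^*|)}{2}\Big)\sharp\Big(\frac{g^2(|T|)+g^2(|T^*|)}{2}\Big).\] In particular, $\pm\mathfrak RT\le\frac{|T|+|T^*|}{2}$ and $\pm\mathfrak IT\le\frac{|T|+|T^*|}{2}$.
   Context: $\mathcal M_n$ denotes the algebra of $n\times n$ complex matrices. $X\ge Y$ means $X-Y$ is positive semidefinite. $|X|=(X^*X)^{1/2}$; functions of positive semidefinite matrices are defined by functional calculus. $\mathfrak RT=\frac{T+T^*}{2}$, $\mathfrak IT=\frac{T-T^*}{2i}$. For positive definite $A,B$, $A\sharp B=A^{1/2}(A^{-1/2}BA^{-1/2})^{1/2}A^{1/2}$; for positive semidefinite $A,B$, $A\sharp B=\lim_{\varepsilon\to0^+}(A+\varepsilon I)\sharp(B+\varepsilon I)$. *)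

theory Defs
  imports "HOL-Analysis.Analysis" "HOL-Computational_Algebra.Polynomial"
begin

text \<open>Complex n x n matrices are rendered as complex^'n^'n (dimension = CARD('n)).\<close>

definition cadj :: "complex^'n^'m \<Rightarrow> complex^'m^'n" where
  "cadj A = (\<chi> i j. cnj (A $ j $ i))"

definition psd :: "complex^'n^'n \<Rightarrow> bool" where
  "psd A \<longleftrightarrow> (\<forall>x::complex^'n.
      Im (\<Sum>i\<in>UNIV. cnj (x $ i) * (A *v x) $ i) = 0 \<and>
      0 \<le> Re (\<Sum>i\<in>UNIV. cnj (x $ i) * (A *v x) $ i))"

definition loewner_le :: "complex^'n^'n \<Rightarrow> complex^'n^'n \<Rightarrow> bool" where
  "loewner_le X Y \<longleftrightarrow> psd (Y - X)"

fun mpow :: "'a::semiring_1^'n^'n \<Rightarrow> nat \<Rightarrow> 'a^'n^'n" where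
  "mpow A 0 = mat 1"
| "mpow A (Suc k) = A ** mpow A k"

definition poly_mat :: "complex poly \<Rightarrow> complex^'n^'n \<Rightarrow> complex^'n^'n" where
  "poly_mat p A = (\<Sum>i\<le>degree p. mat (coeff p i) ** mpow A i)"

definition mspec :: "complex^'n^'n \<Rightarrow> complex set" where
  "mspec A = {l. \<exists>x. x \<noteq> 0 \<and> A *v x = l *s x}"

text \<open>Functional calculus for Hermitian (in particular psd) matrices:
  f(A) = p(A) for any polynomial p interpolating f on the spectrum of A.\<close>
definition matfun :: "(real \<Rightarrow> real) \<Rightarrow> complex^'n^'n \<Rightarrow> complex^'n^'n" where
  "matfun f A = (SOME B. \<exists>p. (\<forall>l\<in>mspec A. poly p l = complex_of_real (f (Re l)))
                             \<and> B = poly_mat p A)"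

definition mabs :: "complex^'n^'n \<Rightarrow> complex^'n^'n" where
  "mabs T = matfun sqrt (cadj T ** T)"

definition gmean_pd :: "complex^'n^'n \<Rightarrow> complex^'n^'n \<Rightarrow> complex^'n^'n" where
  "gmean_pd A B = matfun sqrt A
      ** matfun sqrt (matfun (\<lambda>t. inverse (sqrt t)) A ** B ** matfun (\<lambda>t. inverse (sqrt t)) A)
      ** matfun sqrt A"

definition gmean :: "complex^'n^'n \<Rightarrow> complex^'n^'n \<Rightarrow> complex^'n^'n" where
  "gmean A B = Lim (at_right (0::real))
      (\<lambda>e. gmean_pd (A + e *\<^sub>R mat 1) (B + e *\<^sub>R mat 1))"

definition re_part :: "complex^'n^'n \<Rightarrow> complex^'n^'n" where
  "re_part T = (\<chi> i j. (T $ i $ j + cnj (T $ j $ i)) / 2)"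

definition im_part :: "complex^'n^'n \<Rightarrow> complex^'n^'n" where
  "im_part T = (\<chi> i j. (T $ i $ j - cnj (T $ j $ i)) / (2 * \<i>))"

end

theory Submission
  imports Defs
begin


definition cinner :: "complex^'n \<Rightarrow> complex^'n \<Rightarrow> complex" where
  "cinner x y = (\<Sum>i\<in>UNIV. cnj (x$i) * y$i)"

definition herm :: "complex^'n^'n \<Rightarrow> bool" where "herm A \<longleftrightarrow> cadj A = A"

definition QF :: "complex^'n^'n \<Rightarrow> complex^'n \<Rightarrow> real" where
  "QF A x = Re (cinner x (A *v x))"

lemma psd_iff: "psd A \<longleftrightarrow> (\<forall>x. Im (cinner x (A *v x)) = 0 \<and> 0 \<le> QF A x)"
  by (simp add: psd_def cinner_def QF_def)

lemma cinner_adj: "cinner x (A *v y) = cinner (cadj A *v x) y"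
proof -
  have "cinner x (A *v y) = (\<Sum>i\<in>UNIV. \<Sum>j\<in>UNIV. cnj (x$i) * A$i$j * y$j)"
    unfolding cinner_def matrix_vector_mult_def by (simp add: sum_distrib_left mult.assoc)
  also have "\<dots> = (\<Sum>j\<in>UNIV. \<Sum>i\<in>UNIV. cnj (x$i) * A$i$j * y$j)"
    by (rule sum.swap)
  also have "\<dots> = cinner (cadj A *v x) y"
    unfolding cinner_def matrix_vector_mult_def cadj_def by (simp add: sum_distrib_left mult_ac)
  finally show ?thesis .
qed

lemma cinner_add_right: "cinner x (y + z) = cinner x y + cinner x z"
  by (simp add: cinner_def algebra_simps sum.distrib)
lemma cinner_add_left: "cinner (x + y) z = cinner x z + cinner y z"
  by (simp add: cinner_def algebra_simps sum.distrib)
lemma cinner_diff_right: "cinner x (y - z) = cinner x y - cinner x z"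
  by (simp add: cinner_def algebra_simps sum_subtractf)
lemma cinner_diff_left: "cinner (x - y) z = cinner x z - cinner y z"
  by (simp add: cinner_def algebra_simps sum_subtractf)
lemma cinner_minus_right: "cinner x (- y) = - cinner x y"
  by (simp add: cinner_def sum_negf)
lemma cinner_minus_left: "cinner (- x) y = - cinner x y"
  by (simp add: cinner_def sum_negf)
lemma cinner_scale_right: "cinner x (c *s y) = c * cinner x y"
  by (simp add: cinner_def sum_distrib_left mult_ac)
lemma cinner_scale_left: "cinner (c *s x) y = cnj c * cinner x y"
  by (simp add: cinner_def sum_distrib_left mult_ac)
lemma cinner_zero_right[simp]: "cinner x 0 = 0"
  by (simp add: cinner_def)
lemma cinner_zero_left[simp]: "cinner 0 x = 0"
  by (simp add: cinner_def)
lemma cinner_sym: "cinner y x = cnj (cinner x y)"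
  by (simp add: cinner_def mult.commute)
lemma cinner_sum_right: "cinner x (sum f S) = (\<Sum>k\<in>S. cinner x (f k))"
  by (induct S rule: infinite_finite_induct) (simp_all add: cinner_add_right)

lemma Re_cinner: "Re (cinner x y) = inner x y"
  by (simp add: cinner_def inner_vec_def Re_sum inner_complex_def algebra_simps)

lemma cinner_self: "cinner x x = complex_of_real ((norm x)^2)"
proof -
  have "cinner x x = (\<Sum>i\<in>UNIV. complex_of_real ((cmod (x$i))^2))"
    unfolding cinner_def by (intro sum.cong refl) (metis complex_norm_square mult.commute of_real_power)
  also have "\<dots> = complex_of_real (\<Sum>i\<in>UNIV. (cmod (x$i))^2)" by simp
  also have "(\<Sum>i\<in>UNIV. (cmod (x$i))^2) = (norm x)^2"
    unfolding norm_vec_def L2_set_def by (simp add: sum_nonneg)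
  finally show ?thesis .
qed

lemma cinner_self_Re: "Re (cinner x x) = (norm x)^2"
  by (simp add: cinner_self)
lemma cinner_self_Im: "Im (cinner x x) = 0"
  by (simp add: cinner_self)
lemma cinner_self_eq0: "cinner x x = 0 \<longleftrightarrow> x = 0"
  by (simp add: cinner_self)

lemma cadj_cadj[simp]: "cadj (cadj A) = A"
  by (simp add: cadj_def vec_eq_iff)
lemma cadj_mult: "cadj (A ** B) = cadj B ** cadj A"
  by (simp add: cadj_def matrix_matrix_mult_def vec_eq_iff mult.commute)
lemma cadj_add: "cadj (A + B) = cadj A + cadj B"
  by (simp add: cadj_def vec_eq_iff)
lemma cadj_diff: "cadj (A - B) = cadj A - cadj B"
  by (simp add: cadj_def vec_eq_iff)
lemma cadj_uminus: "cadj (- A) = - cadj A"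
  by (simp add: cadj_def vec_eq_iff)
lemma cadj_mat: "cadj (mat c) = mat (cnj c)"
  by (simp add: cadj_def mat_def vec_eq_iff)
lemma vec_scaleR_nth: "(r *\<^sub>R y) $ i = complex_of_real r * (y $ i)"
  by (metis vector_scaleR_component scaleR_conv_of_real)
lemma cadj_scaleR: "cadj (r *\<^sub>R A) = r *\<^sub>R cadj A"
  by (simp add: cadj_def vec_eq_iff)
lemma cadj_zero[simp]: "cadj 0 = 0"
  by (simp add: cadj_def vec_eq_iff)

lemma herm_cinner: "herm A \<Longrightarrow> cinner x (A *v y) = cinner (A *v x) y"
  by (metis cinner_adj herm_def)

lemma herm_Im: "herm A \<Longrightarrow> Im (cinner x (A *v x)) = 0"
proof -
  assume "herm A"
  hence e: "cinner x (A *v x) = cnj (cinner x (A *v x))" by (metis cinner_sym herm_cinner)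
  have "Im (cinner x (A *v x)) = Im (cnj (cinner x (A *v x)))" by (subst e) simp
  thus ?thesis by simp
qed

lemma herm_add: "herm A \<Longrightarrow> herm B \<Longrightarrow> herm (A + B)"
  by (simp add: herm_def cadj_add)
lemma herm_diff: "herm A \<Longrightarrow> herm B \<Longrightarrow> herm (A - B)"
  by (simp add: herm_def cadj_diff)
lemma herm_uminus: "herm A \<Longrightarrow> herm (- A)"
  by (simp add: herm_def cadj_uminus)
lemma herm_scaleR: "herm A \<Longrightarrow> herm (r *\<^sub>R A)"
  by (simp add: herm_def cadj_scaleR)
lemma herm_mat: "c \<in> \<real> \<Longrightarrow> herm (mat c)"
  by (simp add: herm_def cadj_mat Reals_cnj_iff)
lemma herm_mat_real: "herm (mat (complex_of_real r))"
  by (simp add: herm_mat)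
lemma herm_AA: "herm (cadj A ** A)"
  by (simp add: herm_def cadj_mult)
lemma herm_AA': "herm (A ** cadj A)"
  by (simp add: herm_def cadj_mult)

lemma QF_add: "QF (A + B) x = QF A x + QF B x"
  by (simp add: QF_def matrix_vector_mult_add_rdistrib cinner_add_right)
lemma QF_diff: "QF (A - B) x = QF A x - QF B x"
  by (simp add: QF_def matrix_vector_mult_diff_rdistrib cinner_diff_right)
lemma QF_uminus: "QF (- A) x = - QF A x"
proof -
  have "(- A) *v x = - (A *v x)" by (simp add: matrix_vector_mult_def vec_eq_iff sum_negf)
  thus ?thesis by (simp add: QF_def cinner_minus_right)
qed
lemma mat_scaleR_nth: "(r *\<^sub>R A) $ i $ j = complex_of_real r * (A $ i $ j)"
  by (metis vector_scaleR_component scaleR_conv_of_real)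
lemma mv_scaleR: "(r *\<^sub>R (A::complex^_^_)) *v x = r *\<^sub>R (A *v x)"
proof -
  have "((r *\<^sub>R A) *v x) $ i = (r *\<^sub>R (A *v x)) $ i" for i
    unfolding vec_scaleR_nth by (simp add: matrix_vector_mult_def mat_scaleR_nth sum_distrib_left mult.assoc del: vector_scaleR_component)
  thus ?thesis by (simp add: vec_eq_iff del: vector_scaleR_component)
qed
lemma cinner_scaleR_right: "cinner x (r *\<^sub>R y) = of_real r * cinner x y"
  by (simp add: cinner_def sum_distrib_left mult_ac vec_scaleR_nth del: vector_scaleR_component)
lemma QF_scaleR: "QF (r *\<^sub>R A) x = r * QF A x"
  by (simp add: QF_def mv_scaleR cinner_scaleR_right)

lemma QF_mult_adj: "QF (cadj B ** B) x = (norm (B *v x))^2"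
  by (simp add: QF_def cinner_adj matrix_vector_mul_assoc[symmetric] cinner_self)

lemma psd_herm_iff: "herm A \<Longrightarrow> psd A \<longleftrightarrow> (\<forall>x. 0 \<le> QF A x)"
  by (simp add: psd_iff herm_Im)

lemma mat_mult_left: "mat c ** X = (\<chi> i j. c * X $ i $ j)"
  by (simp add: mat_def matrix_matrix_mult_def vec_eq_iff if_distrib if_distribR sum.delta cong: if_cong)
lemma mat_mult_right: "X ** mat c = (\<chi> i j. X $ i $ j * (c::'a::comm_semiring_1))"
  by (simp add: mat_def matrix_matrix_mult_def vec_eq_iff if_distrib if_distribR sum.delta' cong: if_cong)
lemma mat_comm: "mat (c::'a::comm_semiring_1) ** X = X ** mat c"
  by (simp add: mat_mult_left mat_mult_right mult.commute)
lemma mat_mat_mult: "mat (a::'a::comm_semiring_1) ** mat b = mat (a * b)"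
  unfolding mat_mult_left by (simp add: vec_eq_iff mat_def)
lemma mat_add: "mat (a::'a::comm_semiring_1) + mat b = mat (a + b)"
  by (simp add: vec_eq_iff mat_def)
lemma mat_mult_assoc_left: "mat (c::'a::comm_semiring_1) ** (A ** B) = A ** (mat c ** B)"
  by (metis mat_comm matrix_mul_assoc)
lemma mat_mv: "mat c *v x = c *s x"
  by (simp add: mat_def matrix_vector_mult_def vec_eq_iff vector_scalar_mult_def if_distrib if_distribR sum.delta cong: if_cong)
lemma mat_scaleR: "mat (complex_of_real r) = r *\<^sub>R mat 1"
  by (simp add: mat_def vec_eq_iff of_real_def)

lemma matrix_mul_sum_right: "A ** sum f S = (\<Sum>i\<in>S. A ** f i)"
  by (induct S rule: infinite_finite_induct) (simp_all add: matrix_add_ldistrib)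

lemma matrix_add_rdistrib: "(B + C) ** A = B ** A + C ** A"
  by (simp add: matrix_matrix_mult_def vec_eq_iff algebra_simps sum.distrib)

lemma matrix_diff_rdistrib: "(B - C) ** A = B ** A - C ** (A::'a::ring_1^_^_)"
  by (simp add: matrix_matrix_mult_def vec_eq_iff algebra_simps sum_subtractf)
lemma matrix_diff_ldistrib: "A ** (B - C) = A ** B - A ** (C::'a::ring_1^_^_)"
  by (simp add: matrix_matrix_mult_def vec_eq_iff algebra_simps sum_subtractf)

lemma mpow_comm: "mpow A k ** A = A ** mpow A k"
  by (induct k) (simp_all add: matrix_mul_assoc[symmetric])

lemma mpow_intertwine: "B ** mpow (C ** B) k = mpow (B ** C) k ** B"
  by (induct k) (simp_all add: matrix_mul_assoc[symmetric])

lemma mv_smult: "A *v (c *s v) = (c::complex) *s (A *v v)"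
  by (simp add: vec_eq_iff vector_scalar_mult_def matrix_vector_mult_def sum_distrib_left mult_ac)
lemma smult_smult_vec: "c *s (d *s v) = ((c::complex) * d) *s v"
  by (simp add: vec_eq_iff vector_scalar_mult_def mult_ac)

lemma mpow_eigen: "A *v v = (l::complex) *s v \<Longrightarrow> mpow A k *v v = (l ^ k) *s v"
  by (induct k) (simp_all add: matrix_vector_mul_assoc[symmetric] mv_smult smult_smult_vec mult.commute)

lemma cadj_mpow: "cadj (mpow A k) = mpow (cadj A) k"
  by (induct k) (simp_all add: cadj_mult cadj_mat mpow_comm)

lemma poly_mat_bound:
  assumes "degree p \<le> N"
  shows "poly_mat p A = (\<Sum>i\<le>N. mat (coeff p i) ** mpow A i)"
proof -
  have "(\<Sum>i\<le>N. mat (coeff p i) ** mpow A i) = (\<Sum>i\<le>degree p. mat (coeff p i) ** mpow A i)"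
    by (rule sum.mono_neutral_right) (use assms in \<open>auto simp: coeff_eq_0\<close>)
  thus ?thesis by (simp add: poly_mat_def)
qed

lemma poly_mat_0[simp]: "poly_mat 0 A = 0"
  by (simp add: poly_mat_def)

lemma poly_mat_pCons: "poly_mat (pCons a p) A = mat a + A ** poly_mat p A"
proof -
  have "poly_mat (pCons a p) A = (\<Sum>i\<le>Suc (degree p). mat (coeff (pCons a p) i) ** mpow A i)"
    by (rule poly_mat_bound) (simp add: degree_pCons_le)
  also have "\<dots> = mat a + (\<Sum>i\<le>degree p. mat (coeff p i) ** (A ** mpow A i))"
    by (simp add: sum.atMost_Suc_shift del: sum.atMost_Suc)
  also have "\<dots> = mat a + A ** poly_mat p A"
    by (simp add: poly_mat_def matrix_mul_sum_right mat_mult_assoc_left)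
  finally show ?thesis .
qed

lemma poly_mat_const: "poly_mat [:c:] A = mat c"
  by (simp add: poly_mat_pCons)

lemma poly_mat_add: "poly_mat (p + q) A = poly_mat p A + poly_mat q A"
proof (induct p arbitrary: q)
  case 0 thus ?case by simp
next
  case (pCons a p)
  obtain b q' where q: "q = pCons b q'" by (cases q)
  show ?case using pCons(2)[of q'] unfolding q
    by (simp add: poly_mat_pCons matrix_add_ldistrib algebra_simps mat_add[symmetric])
qed

lemma poly_mat_smult: "poly_mat (smult c p) A = mat c ** poly_mat p A"
  by (induct p) (simp_all add: poly_mat_pCons matrix_add_ldistrib mat_mat_mult mat_mult_assoc_left)

lemma poly_mat_mult: "poly_mat (p * q) A = poly_mat p A ** poly_mat q A"
  by (induct p) (simp_all add: poly_mat_pCons poly_mat_add poly_mat_smult matrix_add_rdistrib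
      matrix_mul_assoc)

lemma poly_mat_uminus: "poly_mat (- p) A = - poly_mat p A"
  by (metis add_eq_0_iff2 neg_eq_iff_add_eq_0 poly_mat_0 poly_mat_add)

lemma poly_mat_diff: "poly_mat (p - q) A = poly_mat p A - poly_mat q A"
  by (metis diff_conv_add_uminus poly_mat_add poly_mat_uminus)

lemma poly_mat_x: "poly_mat [:0,1:] A = A"
  by (simp add: poly_mat_pCons)

lemma poly_mat_pcompose: "poly_mat (pcompose q p) A = poly_mat q (poly_mat p A)"
  by (induct q) (simp_all add: pcompose_pCons poly_mat_add poly_mat_mult poly_mat_const poly_mat_pCons)

lemma poly_mat_comm: "poly_mat p A ** poly_mat q A = poly_mat q A ** poly_mat p A"
  by (metis mult.commute poly_mat_mult)

lemma poly_mat_comm_A: "A ** poly_mat p A = poly_mat p A ** A"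
  by (metis poly_mat_comm poly_mat_x)

lemma poly_mat_intertwine: "B ** poly_mat p (C ** B) = poly_mat p (B ** C) ** B"
  by (induct p) (simp_all add: poly_mat_pCons matrix_add_ldistrib matrix_add_rdistrib
      mat_comm[of _ B] matrix_mul_assoc[symmetric])

lemma poly_mat_eigen: "A *v v = l *s v \<Longrightarrow> poly_mat p A *v v = poly p l *s v"
proof (induct p)
  case 0 thus ?case by (simp add: vec_eq_iff vector_scalar_mult_def)
next
  case (pCons a p)
  have "poly_mat (pCons a p) A *v v = a *s v + A *v (poly p l *s v)"
    using pCons by (simp add: poly_mat_pCons matrix_vector_mult_add_rdistrib mat_mv
        matrix_vector_mul_assoc[symmetric])
  also have "A *v (poly p l *s v) = poly p l *s (A *v v)"
    by (simp add: vec_eq_iff vector_scalar_mult_def matrix_vector_mult_def sum_distrib_left mult_ac)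
  finally show ?case using pCons(3)
    by (simp add: vec_eq_iff vector_scalar_mult_def algebra_simps)
qed

lemma cadj_poly_mat: "cadj (poly_mat p A) = poly_mat (map_poly cnj p) (cadj A)"
  by (induct p) (simp_all add: poly_mat_pCons cadj_add cadj_mult cadj_mat map_poly_pCons
      poly_mat_comm_A)



lemma scaleR_smult: "r *\<^sub>R (x::complex^'n) = complex_of_real r *s x"
  by (simp add: vec_eq_iff vector_scalar_mult_def vec_scaleR_nth del: vector_scaleR_component)

lemma herm_eig_real:
  assumes "herm A" "A *v x = l *s x" "x \<noteq> 0"
  shows "cnj l = l"
proof -
  have "cinner x (A *v x) = l * cinner x x" using assms(2) by (simp add: cinner_scale_right)
  moreover have "cinner x (A *v x) = cnj l * cinner x x"
  proof -
    have "cinner x (A *v x) = cinner (A *v x) x" by (rule herm_cinner[OF assms(1)])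
    also have "\<dots> = cnj l * cinner x x" by (simp add: assms(2) cinner_scale_left)
    finally show ?thesis .
  qed
  moreover have "cinner x x \<noteq> 0" using assms(3) by (simp add: cinner_self_eq0)
  ultimately show ?thesis by simp
qed

lemma herm_eig_Re:
  assumes "herm A" "A *v x = l *s x" "x \<noteq> 0"
  shows "l = complex_of_real (Re l)"
proof -
  have "Im (cnj l) = Im l" using herm_eig_real[OF assms] by simp
  hence "Im l = 0" by simp
  thus ?thesis by (simp add: complex_eq_iff)
qed

lemma mspec_real: "herm A \<Longrightarrow> l \<in> mspec A \<Longrightarrow> l = complex_of_real (Re l)"
  unfolding mspec_def using herm_eig_Re by blast

lemma eig_orth:
  assumes "herm A" "A *v x = l *s x" "A *v y = m *s y" "x \<noteq> 0" "l \<noteq> m"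
  shows "cinner x y = 0"
proof -
  have "cinner x (A *v y) = m * cinner x y" using assms(3) by (simp add: cinner_scale_right)
  moreover have "cinner x (A *v y) = cnj l * cinner x y"
  proof -
    have "cinner x (A *v y) = cinner (A *v x) y" by (rule herm_cinner[OF assms(1)])
    also have "\<dots> = cnj l * cinner x y" by (simp add: assms(2) cinner_scale_left)
    finally show ?thesis .
  qed
  moreover have "cnj l = l" by (rule herm_eig_real[OF assms(1,2,4)])
  ultimately have "m * cinner x y = l * cinner x y" by metis
  hence "(m - l) * cinner x y = 0" by (simp add: algebra_simps)
  moreover have "m - l \<noteq> 0" using assms(5) by simp
  ultimately show ?thesis by simp
qed

lemma mspec_finite:
  assumes "herm A"
  shows "finite (mspec A)"
proof -
  define ev where "ev l = (SOME x. x \<noteq> 0 \<and> A *v x = l *s x)" for l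
  have ev: "ev l \<noteq> 0 \<and> A *v ev l = l *s ev l" if "l \<in> mspec A" for l
    unfolding ev_def using that unfolding mspec_def by (rule CollectE) (rule someI_ex)
  have inj: "inj_on ev (mspec A)"
  proof (rule inj_onI)
    fix l m assume lm: "l \<in> mspec A" "m \<in> mspec A" "ev l = ev m"
    show "l = m"
    proof (rule ccontr)
      assume "l \<noteq> m"
      hence "cinner (ev l) (ev m) = 0" using eig_orth[OF assms] ev lm(1,2) by blast
      thus False using lm(3) ev[OF lm(1)] by (simp add: cinner_self_eq0)
    qed
  qed
  have "pairwise orthogonal (ev ` mspec A)"
    unfolding pairwise_def orthogonal_def
  proof clarify
    fix l m assume lm: "l \<in> mspec A" "m \<in> mspec A" "ev l \<noteq> ev m"
    hence "l \<noteq> m" by auto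
    hence "cinner (ev l) (ev m) = 0" using eig_orth[OF assms] ev lm(1,2) by blast
    thus "inner (ev l) (ev m) = 0" by (metis Re_cinner zero_complex.sel(1))
  qed
  moreover have "0 \<notin> ev ` mspec A" using ev by auto
  ultimately have "independent (ev ` mspec A)" by (rule pairwise_orthogonal_independent)
  hence "finite (ev ` mspec A)" by (rule independent_imp_finite)
  thus ?thesis using inj by (rule finite_imageD)
qed

definition csub :: "(complex^'n) set \<Rightarrow> bool" where
  "csub S \<longleftrightarrow> 0 \<in> S \<and> (\<forall>x\<in>S. \<forall>y\<in>S. x + y \<in> S) \<and> (\<forall>c. \<forall>x\<in>S. c *s x \<in> S)"

lemma csub_subspace: "csub S \<Longrightarrow> subspace S"
  unfolding csub_def subspace_def by (simp add: scaleR_smult)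

lemma csub_diff: "csub S \<Longrightarrow> x \<in> S \<Longrightarrow> y \<in> S \<Longrightarrow> x - y \<in> S"
  using csub_subspace subspace_diff by blast

lemma csub_scaleR: "csub S \<Longrightarrow> x \<in> S \<Longrightarrow> r *\<^sub>R x \<in> S"
  using csub_subspace subspace_scale by blast

lemma QF_cont: "continuous_on X (\<lambda>y. QF H y)"
proof -
  have "QF H y = inner y (H *v y)" for y by (simp add: QF_def Re_cinner)
  hence e: "(\<lambda>y. QF H y) = (\<lambda>y. inner y (H *v y))" by auto
  have "linear (\<lambda>y. H *v (y::complex^_))" by (rule matrix_vector_mul_linear)
  hence "continuous_on X (\<lambda>y. H *v y)" by (simp add: linear_continuous_on linear_linear)
  thus ?thesis unfolding e by (intro continuous_intros)
qed

lemma QF_add_vec: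
  assumes "herm B"
  shows "QF B (x + y) = QF B x + 2 * Re (cinner y (B *v x)) + QF B y"
proof -
  have "cinner x (B *v y) = cnj (cinner y (B *v x))"
    using assms by (metis cinner_sym herm_cinner)
  thus ?thesis
    by (simp add: QF_def matrix_vector_right_distrib cinner_add_left cinner_add_right)
qed

lemma QF_smult_real: "QF B (complex_of_real r *s x) = r^2 * QF B x"
  by (simp add: QF_def mv_smult cinner_scale_left cinner_scale_right power2_eq_square)
lemma QF_scaleR_vec: "QF B (r *\<^sub>R x) = r^2 * QF B x"
  by (simp add: scaleR_smult QF_smult_real)

lemma quad_zero:
  fixes a d :: real
  assumes "\<forall>t. 0 \<le> 2 * t * a + t^2 * d" "d \<ge> 0"
  shows "a = 0"
proof (rule ccontr)
  assume "a \<noteq> 0"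
  define t where "t = - a / (d + 1)"
  have te: "t * (d + 1) = - a" using assms(2) by (simp add: t_def)
  have "(2 * t * a + t^2 * d) * (d + 1)^2 = 2 * a * (d + 1) * (t * (d + 1)) + d * (t * (d + 1))^2"
    by (simp add: algebra_simps power2_eq_square)
  also have "\<dots> = - (a^2 * (d + 2))" unfolding te by (simp add: algebra_simps power2_eq_square)
  also have "\<dots> < 0" using \<open>a \<noteq> 0\<close> assms(2) by (simp add: mult_pos_pos)
  finally have "(2 * t * a + t^2 * d) * (d + 1)^2 < 0" .
  moreover have "(d + 1)^2 > 0" using assms(2) by simp
  ultimately have "2 * t * a + t^2 * d < 0" by (simp add: mult_less_0_iff)
  thus False using assms(1) by (metis not_le)
qed

lemma rayleigh:
  assumes H: "herm H" and S: "csub S" and inv: "\<forall>x\<in>S. H *v x \<in> S" and ne: "\<exists>x\<in>S. x \<noteq> 0"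
  shows "\<exists>x\<in>S. x \<noteq> 0 \<and> (\<exists>\<mu>::real. H *v x = complex_of_real \<mu> *s x \<and>
            (\<forall>y\<in>S. QF H y \<le> \<mu> * (norm y)^2))"
proof -
  define K where "K = S \<inter> sphere 0 1"
  have "closed S" by (rule closed_subspace[OF csub_subspace[OF S]])
  hence cK: "compact K" unfolding K_def by (simp add: closed_Int_compact)
  from ne obtain x0 where x0: "x0 \<in> S" "x0 \<noteq> 0" by blast
  have "(1 / norm x0) *\<^sub>R x0 \<in> K" unfolding K_def using x0 csub_scaleR[OF S] by auto
  hence "K \<noteq> {}" by auto
  from continuous_attains_sup[OF cK this QF_cont]
  obtain x where x: "x \<in> K" and xmax: "\<forall>y\<in>K. QF H y \<le> QF H x" by blast
  define \<mu> where "\<mu> = QF H x"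
  have xS: "x \<in> S" and nx: "norm x = 1" using x unfolding K_def by auto
  have bound: "QF H y \<le> \<mu> * (norm y)^2" if "y \<in> S" for y
  proof (cases "y = 0")
    case True thus ?thesis by (simp add: QF_def)
  next
    case False
    hence "(1 / norm y) *\<^sub>R y \<in> K" unfolding K_def using that csub_scaleR[OF S] by auto
    hence "QF H ((1 / norm y) *\<^sub>R y) \<le> \<mu>" using xmax \<mu>_def by auto
    hence "(1 / norm y)^2 * QF H y \<le> \<mu>" by (simp add: QF_scaleR_vec)
    thus ?thesis using False by (simp add: field_simps power2_eq_square)
  qed
  define B where "B = mat (complex_of_real \<mu>) - H"
  have hB: "herm B" unfolding B_def by (intro herm_diff herm_mat_real H)
  have QB: "QF B y = \<mu> * (norm y)^2 - QF H y" for y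
    unfolding B_def QF_diff by (simp add: QF_def mat_mv cinner_scale_right cinner_self)
  have QBnn: "QF B y \<ge> 0" if "y \<in> S" for y using bound[OF that] QB by simp
  have QBx: "QF B x = 0" using QB nx \<mu>_def by simp
  define w where "w = B *v x"
  have wS: "w \<in> S"
  proof -
    have "B *v x = complex_of_real \<mu> *s x - H *v x"
      by (simp add: B_def matrix_vector_mult_diff_rdistrib mat_mv)
    thus ?thesis unfolding w_def using S xS inv csub_diff unfolding csub_def by metis
  qed
  have re0: "Re (cinner y w) = 0" if "y \<in> S" for y
  proof -
    have "\<forall>t. 0 \<le> 2 * t * Re (cinner y w) + t^2 * QF B y"
    proof
      fix t :: real
      have "t *\<^sub>R y \<in> S" using csub_scaleR[OF S that] .
      hence "x + t *\<^sub>R y \<in> S" using S xS unfolding csub_def by blast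
      hence "0 \<le> QF B (x + t *\<^sub>R y)" by (rule QBnn)
      also have "QF B (x + t *\<^sub>R y) = 2 * t * Re (cinner y w) + t^2 * QF B y"
        by (simp add: QF_add_vec[OF hB] QBx QF_scaleR_vec QF_smult_real w_def scaleR_smult cinner_scale_left)
      finally show "0 \<le> 2 * t * Re (cinner y w) + t^2 * QF B y" .
    qed
    thus ?thesis by (rule quad_zero[OF _ QBnn[OF that]])
  qed
  have "cinner y w = 0" if "y \<in> S" for y
  proof -
    have "\<i> *s y \<in> S" using S that unfolding csub_def by blast
    hence "Re (cinner (\<i> *s y) w) = 0" by (rule re0)
    hence "Im (cinner y w) = 0" by (simp add: cinner_scale_left)
    moreover have "Re (cinner y w) = 0" using re0 that .
    ultimately show ?thesis by (simp add: complex_eq_iff)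
  qed
  hence "cinner w w = 0" using wS by blast
  hence "w = 0" by (simp add: cinner_self_eq0)
  hence "H *v x = complex_of_real \<mu> *s x"
    by (simp add: w_def B_def matrix_vector_mult_diff_rdistrib mat_mv)
  moreover have "x \<noteq> 0" using nx by auto
  ultimately have "x \<in> S \<and> x \<noteq> 0 \<and> H *v x = complex_of_real \<mu> *s x \<and> (\<forall>y\<in>S. QF H y \<le> \<mu> * (norm y)^2)"
    using xS bound by blast
  thus ?thesis by (intro bexI[where x=x] conjI exI[where x=\<mu>]) auto
qed

lemma eig_span:
  assumes H: "herm H"
  shows "{y. \<forall>e l. H *v e = l *s e \<longrightarrow> cinner e y = 0} = {0}"
proof -
  define S where "S = {y. \<forall>e l. H *v e = l *s e \<longrightarrow> cinner e y = 0}"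
  have S: "csub S" unfolding csub_def S_def
    by (auto simp: cinner_add_right cinner_scale_right)
  have inv: "\<forall>x\<in>S. H *v x \<in> S"
  proof (clarify)
    fix x assume x: "x \<in> S"
    show "H *v x \<in> S" unfolding S_def
    proof (clarify)
      fix e l assume e: "H *v e = l *s e"
      show "cinner e (H *v x) = 0"
      proof (cases "e = 0")
        case True thus ?thesis by simp
      next
        case False
        have "cinner e (H *v x) = cnj l * cinner e x"
          using H e by (simp add: herm_cinner cinner_scale_left)
        thus ?thesis using x e unfolding S_def by simp
      qed
    qed
  qed
  have "\<not> (\<exists>x\<in>S. x \<noteq> 0)"
  proof
    assume "\<exists>x\<in>S. x \<noteq> 0"
    from rayleigh[OF H S inv this] obtain x \<mu> where x: "x \<in> S" "x \<noteq> 0"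
      "H *v x = complex_of_real \<mu> *s x" by blast
    hence "cinner x x = 0" unfolding S_def by blast
    thus False using x(2) by (simp add: cinner_self_eq0)
  qed
  moreover have "0 \<in> S" using S unfolding csub_def by blast
  ultimately have "S = {0}" by blast
  thus ?thesis unfolding S_def .
qed

lemma poly_zero_mat:
  assumes H: "herm H" and p: "\<forall>l\<in>mspec H. poly p l = 0"
  shows "poly_mat p H = 0"
proof -
  have "poly_mat p H *v y = 0" for y
  proof -
    have "poly_mat p H *v y \<in> {y. \<forall>e l. H *v e = l *s e \<longrightarrow> cinner e y = 0}"
    proof (clarify)
      fix e l assume e: "H *v e = l *s e"
      show "cinner e (poly_mat p H *v y) = 0"
      proof (cases "e = 0")
        case True thus ?thesis by simp
      next
        case False
        have lm: "l \<in> mspec H" unfolding mspec_def using False e by blast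
        have cl: "cnj l = l" by (rule herm_eig_real[OF H e False])
        have "cinner e (poly_mat p H *v y) = cinner (poly_mat (map_poly cnj p) H *v e) y"
          using H by (simp add: cinner_adj cadj_poly_mat herm_def)
        also have "\<dots> = cinner (poly (map_poly cnj p) l *s e) y"
          by (simp add: poly_mat_eigen[OF e])
        also have "\<dots> = poly p l * cinner e y" by (simp add: cinner_scale_left cl)
        finally show ?thesis using p lm by simp
      qed
    qed
    thus ?thesis using eig_span[OF H] by blast
  qed
  thus ?thesis by (simp add: matrix_eq)
qed

lemma interp:
  fixes v :: "complex \<Rightarrow> complex"
  assumes fin: "finite L"
  shows "\<exists>p. \<forall>l\<in>L. poly p l = v l"
proof -
  define c where "c l = v l / (\<Prod>m\<in>L-{l}. (l - m))" for l
  define p where "p = (\<Sum>l\<in>L. smult (c l) (\<Prod>m\<in>L-{l}. [:-m, 1:]))"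
  have "poly p k = v k" if k: "k \<in> L" for k
  proof -
    have "poly p k = (\<Sum>l\<in>L. c l * (\<Prod>m\<in>L-{l}. (k - m)))"
      unfolding p_def poly_sum by (simp add: poly_prod)
    also have "\<dots> = c k * (\<Prod>m\<in>L-{k}. (k - m))
         + (\<Sum>l\<in>L-{k}. c l * (\<Prod>m\<in>L-{l}. (k - m)))"
      by (rule sum.remove[OF fin k])
    also have "(\<Sum>l\<in>L-{k}. c l * (\<Prod>m\<in>L-{l}. (k - m))) = 0"
    proof (rule sum.neutral, rule ballI)
      fix l assume l: "l \<in> L - {k}"
      have "(\<Prod>m\<in>L-{l}. (k - m)) = 0"
        by (rule prod_zero) (use fin k l in auto)
      thus "c l * (\<Prod>m\<in>L-{l}. (k - m)) = 0" by simp
    qed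
    also have "(\<Prod>m\<in>L-{k}. (k - m)) \<noteq> 0" using fin by (simp add: prod_zero_iff)
    hence "c k * (\<Prod>m\<in>L-{k}. (k - m)) = v k" by (simp add: c_def)
    finally show ?thesis by simp
  qed
  thus ?thesis by blast
qed



lemma mf_interp:
  assumes "finite L"
  shows "\<exists>p. \<forall>l\<in>L. poly p l = complex_of_real (f (Re l))"
  by (rule interp[OF assms])

lemma mf_eq:
  assumes H: "herm H" and p: "\<forall>l\<in>mspec H. poly p l = complex_of_real (f (Re l))"
  shows "matfun f H = poly_mat p H"
proof -
  have ex: "\<exists>B. \<exists>p. (\<forall>l\<in>mspec H. poly p l = complex_of_real (f (Re l))) \<and> B = poly_mat p H"
    using p by blast
  from someI_ex[OF ex] obtain q where q: "\<forall>l\<in>mspec H. poly q l = complex_of_real (f (Re l))"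
    and mq: "matfun f H = poly_mat q H" unfolding matfun_def by blast
  have "poly_mat (q - p) H = 0"
    by (rule poly_zero_mat[OF H]) (use p q in simp)
  thus ?thesis using mq by (simp add: poly_mat_diff)
qed

lemma mf_poly:
  assumes H: "herm H" and L: "finite L" "mspec H \<subseteq> L"
  obtains p where "\<forall>l\<in>L. poly p l = complex_of_real (f (Re l))" "matfun f H = poly_mat p H"
proof -
  from mf_interp[OF L(1)] obtain p where p: "\<forall>l\<in>L. poly p l = complex_of_real (f (Re l))" by blast
  hence "matfun f H = poly_mat p H" using L(2) by (intro mf_eq[OF H]) auto
  thus ?thesis using p that by blast
qed

lemma mf_poly0:
  assumes H: "herm H"
  obtains p where "\<forall>l\<in>mspec H. poly p l = complex_of_real (f (Re l))" "matfun f H = poly_mat p H"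
  using mf_poly[OF H mspec_finite[OF H] order_refl] by blast

lemma mf_cong:
  assumes H: "herm H" and fg: "\<forall>l\<in>mspec H. f (Re l) = g (Re l)"
  shows "matfun f H = matfun g H"
proof -
  obtain p where p: "\<forall>l\<in>mspec H. poly p l = complex_of_real (f (Re l))" "matfun f H = poly_mat p H"
    by (rule mf_poly0[OF H])
  have "matfun g H = poly_mat p H" using p(1) fg by (intro mf_eq[OF H]) auto
  thus ?thesis using p(2) by simp
qed

lemma mf_add:
  assumes H: "herm H"
  shows "matfun f H + matfun g H = matfun (\<lambda>t. f t + g t) H"
proof -
  obtain p where p: "\<forall>l\<in>mspec H. poly p l = complex_of_real (f (Re l))" "matfun f H = poly_mat p H"
    by (rule mf_poly0[OF H])
  obtain q where q: "\<forall>l\<in>mspec H. poly q l = complex_of_real (g (Re l))" "matfun g H = poly_mat q H"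
    by (rule mf_poly0[OF H])
  have "matfun (\<lambda>t. f t + g t) H = poly_mat (p + q) H" using p(1) q(1) by (intro mf_eq[OF H]) auto
  thus ?thesis using p(2) q(2) by (simp add: poly_mat_add)
qed

lemma mf_diff:
  assumes H: "herm H"
  shows "matfun f H - matfun g H = matfun (\<lambda>t. f t - g t) H"
proof -
  obtain p where p: "\<forall>l\<in>mspec H. poly p l = complex_of_real (f (Re l))" "matfun f H = poly_mat p H"
    by (rule mf_poly0[OF H])
  obtain q where q: "\<forall>l\<in>mspec H. poly q l = complex_of_real (g (Re l))" "matfun g H = poly_mat q H"
    by (rule mf_poly0[OF H])
  have "matfun (\<lambda>t. f t - g t) H = poly_mat (p - q) H" using p(1) q(1) by (intro mf_eq[OF H]) auto
  thus ?thesis using p(2) q(2) by (simp add: poly_mat_diff)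
qed

lemma mf_mult:
  assumes H: "herm H"
  shows "matfun f H ** matfun g H = matfun (\<lambda>t. f t * g t) H"
proof -
  obtain p where p: "\<forall>l\<in>mspec H. poly p l = complex_of_real (f (Re l))" "matfun f H = poly_mat p H"
    by (rule mf_poly0[OF H])
  obtain q where q: "\<forall>l\<in>mspec H. poly q l = complex_of_real (g (Re l))" "matfun g H = poly_mat q H"
    by (rule mf_poly0[OF H])
  have "matfun (\<lambda>t. f t * g t) H = poly_mat (p * q) H" using p(1) q(1) by (intro mf_eq[OF H]) auto
  thus ?thesis using p(2) q(2) by (simp add: poly_mat_mult)
qed

lemma mat_real_mult: "mat (complex_of_real r) ** X = r *\<^sub>R X"
  by (simp add: mat_scaleR scalar_matrix_assoc[symmetric])

lemma mf_scale:
  assumes H: "herm H"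
  shows "r *\<^sub>R matfun f H = matfun (\<lambda>t. r * f t) H"
proof -
  obtain p where p: "\<forall>l\<in>mspec H. poly p l = complex_of_real (f (Re l))" "matfun f H = poly_mat p H"
    by (rule mf_poly0[OF H])
  have "matfun (\<lambda>t. r * f t) H = poly_mat (smult (complex_of_real r) p) H" using p(1)
    by (intro mf_eq[OF H]) auto
  thus ?thesis using p(2) by (simp add: poly_mat_smult mat_real_mult)
qed

lemma mf_const:
  assumes H: "herm H"
  shows "matfun (\<lambda>t. c) H = mat (complex_of_real c)"
proof -
  have "matfun (\<lambda>t. c) H = poly_mat [:complex_of_real c:] H" by (intro mf_eq[OF H]) auto
  thus ?thesis by (simp add: poly_mat_const)
qed

lemma mf_id:
  assumes H: "herm H"
  shows "matfun (\<lambda>t. t) H = H"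
proof -
  have "matfun (\<lambda>t. t) H = poly_mat [:0, 1:] H"
    by (intro mf_eq[OF H]) (use mspec_real[OF H] in auto)
  thus ?thesis by (simp add: poly_mat_x)
qed

lemma mf_herm:
  assumes H: "herm H"
  shows "herm (matfun f H)"
proof -
  obtain p where p: "\<forall>l\<in>mspec H. poly p l = complex_of_real (f (Re l))" "matfun f H = poly_mat p H"
    by (rule mf_poly0[OF H])
  have "\<forall>l\<in>mspec H. poly (map_poly cnj p) l = complex_of_real (f (Re l))"
  proof
    fix l assume l: "l \<in> mspec H"
    have "cnj l = l" using mspec_real[OF H l] by (metis complex_cnj_complex_of_real)
    thus "poly (map_poly cnj p) l = complex_of_real (f (Re l))" using p(1) l by simp
  qed
  hence "matfun f H = poly_mat (map_poly cnj p) H" by (rule mf_eq[OF H])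
  moreover have "cadj (poly_mat p H) = poly_mat (map_poly cnj p) H"
    using H by (simp add: cadj_poly_mat herm_def)
  ultimately show ?thesis using p(2) by (simp add: herm_def)
qed

lemma psd_spec:
  assumes H: "herm H" and pos: "\<forall>x. 0 \<le> QF H x" and l: "l \<in> mspec H"
  shows "0 \<le> Re l"
proof -
  from l obtain v where v: "v \<noteq> 0" "H *v v = l *s v" unfolding mspec_def by blast
  have "QF H v = Re (l * complex_of_real ((norm v)^2))"
    by (simp add: QF_def v(2) cinner_scale_right cinner_self)
  also have "\<dots> = Re l * (norm v)^2" by simp
  finally have "0 \<le> Re l * (norm v)^2" using pos by metis
  moreover have "(norm v)^2 > 0" using v by simp
  ultimately show ?thesis by (simp add: zero_le_mult_iff)
qed

lemma mf_psd:
  assumes H: "herm H" and f: "\<forall>l\<in>mspec H. 0 \<le> f (Re l)"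
  shows "0 \<le> QF (matfun f H) x"
proof -
  define Q where "Q = matfun (\<lambda>t. sqrt (f t)) H"
  have "Q ** Q = matfun (\<lambda>t. sqrt (f t) * sqrt (f t)) H" unfolding Q_def by (rule mf_mult[OF H])
  also have "\<dots> = matfun f H" using f by (intro mf_cong[OF H]) auto
  finally have e: "Q ** Q = matfun f H" .
  have hQ: "cadj Q = Q" using mf_herm[OF H] unfolding Q_def herm_def by blast
  have mQ: "matfun f H = cadj Q ** Q" using e hQ by simp
  have "QF (matfun f H) x = (norm (Q *v x))^2" unfolding mQ by (rule QF_mult_adj)
  thus ?thesis by simp
qed

lemma mf_intertwine:
  assumes "herm (C ** B)" "herm (B ** C)"
  shows "B ** matfun f (C ** B) = matfun f (B ** C) ** B"
proof -
  have fin: "finite (mspec (C ** B) \<union> mspec (B ** C))" using mspec_finite[OF assms(1)] mspec_finite[OF assms(2)] by simp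
  from mf_interp[OF fin] obtain p where
    p: "\<forall>l\<in>mspec (C ** B) \<union> mspec (B ** C). poly p l = complex_of_real (f (Re l))" by blast
  have "matfun f (C ** B) = poly_mat p (C ** B)" using p by (intro mf_eq[OF assms(1)]) auto
  moreover have "matfun f (B ** C) = poly_mat p (B ** C)" using p by (intro mf_eq[OF assms(2)]) auto
  ultimately show ?thesis by (simp add: poly_mat_intertwine)
qed

lemma mspec_poly_mat:
  assumes H: "herm H"
  shows "mspec (poly_mat p H) \<subseteq> poly p ` mspec H"
proof
  fix \<nu> assume \<nu>: "\<nu> \<in> mspec (poly_mat p H)"
  define r where "r = (\<Prod>\<mu>\<in>mspec H. [:- poly p \<mu>, 1:])"
  have "poly_mat (pcompose r p) H = 0"
  proof (rule poly_zero_mat[OF H], rule ballI)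
    fix l assume l: "l \<in> mspec H"
    have "poly (pcompose r p) l = (\<Prod>\<mu>\<in>mspec H. poly p l - poly p \<mu>)"
      by (simp add: poly_pcompose r_def poly_prod)
    also have "\<dots> = 0" using l mspec_finite[OF H] by (intro prod_zero) auto
    finally show "poly (pcompose r p) l = 0" .
  qed
  hence r0: "poly_mat r (poly_mat p H) = 0" by (simp add: poly_mat_pcompose)
  from \<nu> obtain v where v: "v \<noteq> 0" "poly_mat p H *v v = \<nu> *s v" unfolding mspec_def by blast
  have "poly r \<nu> *s v = 0" using poly_mat_eigen[OF v(2), of r] r0 by simp
  hence "poly r \<nu> = 0" using v(1) by (auto simp: vec_eq_iff vector_scalar_mult_def)
  hence "(\<Prod>\<mu>\<in>mspec H. \<nu> - poly p \<mu>) = 0" by (simp add: r_def poly_prod)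
  then obtain \<mu> where "\<mu> \<in> mspec H" "\<nu> = poly p \<mu>" using mspec_finite[OF H]
    by (auto simp: prod_zero_iff)
  thus "\<nu> \<in> poly p ` mspec H" by blast
qed

lemma mf_comp:
  assumes H: "herm H"
  shows "matfun h (matfun k H) = matfun (\<lambda>t. h (k t)) H"
proof -
  obtain p where p: "\<forall>l\<in>mspec H. poly p l = complex_of_real (k (Re l))" "matfun k H = poly_mat p H"
    by (rule mf_poly0[OF H])
  have hP: "herm (poly_mat p H)" using mf_herm[OF H, of k] p(2) by simp
  have fin: "finite (poly p ` mspec H)" using mspec_finite[OF H] by simp
  from mf_interp[OF fin] obtain q where q: "\<forall>l\<in>poly p ` mspec H. poly q l = complex_of_real (h (Re l))"
    by blast
  have "matfun h (poly_mat p H) = poly_mat q (poly_mat p H)"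
    using q mspec_poly_mat[OF H, of p] by (intro mf_eq[OF hP]) auto
  also have "\<dots> = poly_mat (pcompose q p) H" by (simp add: poly_mat_pcompose)
  also have "\<dots> = matfun (\<lambda>t. h (k t)) H"
  proof (rule mf_eq[OF H, symmetric], rule ballI)
    fix l assume l: "l \<in> mspec H"
    have "poly (pcompose q p) l = poly q (poly p l)" by (simp add: poly_pcompose)
    also have "\<dots> = complex_of_real (h (Re (poly p l)))" using q l by blast
    also have "Re (poly p l) = k (Re l)" using p(1) l by simp
    finally show "poly (pcompose q p) l = complex_of_real (h (k (Re l)))" .
  qed
  finally show ?thesis using p(2) by simp
qed

lemma mf_eigen:
  assumes H: "herm H" and v: "H *v v = l *s v" "v \<noteq> 0"
  shows "matfun f H *v v = complex_of_real (f (Re l)) *s v"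
proof -
  obtain p where p: "\<forall>l\<in>mspec H. poly p l = complex_of_real (f (Re l))" "matfun f H = poly_mat p H"
    by (rule mf_poly0[OF H])
  have "l \<in> mspec H" using v unfolding mspec_def by blast
  thus ?thesis using p poly_mat_eigen[OF v(1), of p] by simp
qed



lemma norm_add_sq: "(norm (a + b))^2 = (norm a)^2 + 2 * Re (cinner b a) + (norm b)^2"
proof -
  have "complex_of_real ((norm (a + b))^2) = cinner (a + b) (a + b)" by (simp add: cinner_self)
  also have "\<dots> = cinner a a + cinner a b + cinner b a + cinner b b"
    by (simp add: cinner_add_left cinner_add_right)
  finally have "(norm (a + b))^2 = Re (cinner a a) + Re (cinner a b) + Re (cinner b a) + Re (cinner b b)"
    by (metis Re_complex_of_real plus_complex.sel(1))
  moreover have "Re (cinner a b) = Re (cinner b a)" by (metis cinner_sym complex_cnj_cancel_iff cnj.sel(1))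
  ultimately show ?thesis by (simp add: cinner_self_Re)
qed

lemma QF_AA_nonneg: "0 \<le> QF (cadj T ** T) x"
  by (simp add: QF_mult_adj)

lemma spec_AA: "l \<in> mspec (cadj T ** T) \<Longrightarrow> 0 \<le> Re l"
  by (rule psd_spec[OF herm_AA]) (simp_all add: QF_mult_adj)

lemma spec_AA': "l \<in> mspec (T ** cadj T) \<Longrightarrow> 0 \<le> Re l"
  using spec_AA[of l "cadj T"] by simp

lemma block:
  fixes F G :: "real \<Rightarrow> real" and T :: "complex^'n^'n"
  assumes FG: "\<forall>s\<ge>0. 0 \<le> F s \<and> 0 \<le> G s \<and> F s * G s = s"
  shows "0 \<le> QF (matfun F (cadj T ** T)) u + 2 * Re (cinner v (T *v u)) + QF (matfun G (T ** cadj T)) v"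
proof -
  define M1 where "M1 = cadj T ** T"
  define M2 where "M2 = T ** cadj T"
  have h1: "herm M1" and h2: "herm M2" unfolding M1_def M2_def by (rule herm_AA, rule herm_AA')
  have s1: "\<forall>l\<in>mspec M1. 0 \<le> Re l" unfolding M1_def using spec_AA by blast
  have s2: "\<forall>l\<in>mspec M2. 0 \<le> Re l" unfolding M2_def using spec_AA' by blast
  have Fpos: "F s > 0" if "s > 0" for s
  proof -
    have "F s * G s = s" "F s \<ge> 0" using FG that by auto
    thus ?thesis using that by (metis less_eq_real_def mult_zero_left)
  qed
  define ph where "ph s = sqrt (F s)" for s
  define chf where "chf s = (if s > 0 then 1 / sqrt (F s) else 0)" for s
  define Ph where "Ph = matfun ph M1"
  define Yc where "Yc = matfun chf M2"
  define Y where "Y = cadj T ** Yc"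
  have hPhi: "cadj Ph = Ph" using mf_herm[OF h1] unfolding Ph_def herm_def by blast
  have hYc: "cadj Yc = Yc" using mf_herm[OF h2] unfolding Yc_def herm_def by blast
  have PhiPhi: "Ph ** Ph = matfun F M1"
  proof -
    have "Ph ** Ph = matfun (\<lambda>t. ph t * ph t) M1" unfolding Ph_def by (rule mf_mult[OF h1])
    also have "\<dots> = matfun F M1"
    proof (rule mf_cong[OF h1], rule ballI)
      fix l assume "l \<in> mspec M1"
      hence "0 \<le> F (Re l)" using s1 FG by blast
      thus "ph (Re l) * ph (Re l) = F (Re l)" by (simp add: ph_def)
    qed
    finally show ?thesis .
  qed
  have inter: "Ph ** cadj T = cadj T ** matfun ph M2"
    unfolding Ph_def M1_def M2_def
    using mf_intertwine[of T "cadj T" ph] herm_AA[of T] herm_AA'[of T] by simp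
  have kk: "matfun ph M2 ** Yc = matfun (\<lambda>s. ph s * chf s) M2" unfolding Yc_def by (rule mf_mult[OF h2])
  define W where "W = matfun (\<lambda>s. ph s * chf s - 1) M2"
  have WW: "matfun (\<lambda>s. ph s * chf s) M2 = W + mat 1"
  proof -
    have "W = matfun (\<lambda>s. ph s * chf s) M2 - matfun (\<lambda>s. 1) M2" unfolding W_def by (rule mf_diff[OF h2, symmetric])
    thus ?thesis by (simp add: mf_const[OF h2])
  qed
  have M2W: "M2 ** W = 0"
  proof -
    have "M2 ** W = matfun (\<lambda>s. s * (ph s * chf s - 1)) M2"
      unfolding W_def by (subst (1) mf_id[OF h2, symmetric]) (rule mf_mult[OF h2])
    also have "\<dots> = matfun (\<lambda>s. 0) M2"
    proof (rule mf_cong[OF h2], rule ballI)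
      fix l assume l: "l \<in> mspec M2"
      show "Re l * (ph (Re l) * chf (Re l) - 1) = 0"
      proof (cases "Re l > 0")
        case True
        hence "F (Re l) > 0" by (rule Fpos)
        thus ?thesis using True by (simp add: ph_def chf_def)
      next
        case False
        hence "Re l = 0" using s2 l by force
        thus ?thesis by simp
      qed
    qed
    also have "\<dots> = 0" by (simp add: mf_const[OF h2])
    finally show ?thesis .
  qed
  have TW: "cadj T ** W = 0"
  proof -
    have "cadj T *v (W *v y) = 0" for y
    proof -
      have "(norm (cadj T *v (W *v y)))^2 = QF (cadj (cadj T) ** cadj T) (W *v y)"
        by (rule QF_mult_adj[symmetric])
      also have "\<dots> = Re (cinner (W *v y) ((M2 ** W) *v y))"
        by (simp add: QF_def M2_def matrix_vector_mul_assoc)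
      also have "\<dots> = 0" by (simp add: M2W)
      finally show ?thesis by simp
    qed
    thus ?thesis by (simp add: matrix_eq matrix_vector_mul_assoc)
  qed
  have PhiY: "Ph ** Y = cadj T"
  proof -
    have "Ph ** Y = (Ph ** cadj T) ** Yc" by (simp add: Y_def matrix_mul_assoc)
    also have "\<dots> = cadj T ** (matfun ph M2 ** Yc)" by (simp add: inter matrix_mul_assoc)
    also have "\<dots> = cadj T ** (W + mat 1)" by (simp add: kk WW)
    also have "\<dots> = cadj T" by (simp add: matrix_add_ldistrib TW)
    finally show ?thesis .
  qed
  have Tf: "T = cadj Y ** Ph"
  proof -
    have "cadj (Ph ** Y) = T" by (simp add: PhiY)
    thus ?thesis by (simp add: cadj_mult hPhi)
  qed
  define G' where "G' s = chf s * s * chf s" for s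
  have YY: "cadj Y ** Y = matfun G' M2"
  proof -
    have "cadj Y ** Y = (Yc ** M2) ** Yc"
      by (simp add: Y_def cadj_mult hYc M2_def matrix_mul_assoc)
    also have "Yc ** M2 = matfun (\<lambda>s. chf s * s) M2"
      unfolding Yc_def by (subst (2) mf_id[OF h2, symmetric]) (rule mf_mult[OF h2])
    also have "matfun (\<lambda>s. chf s * s) M2 ** Yc = matfun G' M2"
      unfolding Yc_def G'_def by (rule mf_mult[OF h2])
    finally show ?thesis .
  qed
  have GG: "matfun G M2 = cadj Y ** Y + matfun (\<lambda>s. G s - G' s) M2"
    using mf_diff[OF h2, of G G'] YY by (simp add: algebra_simps)
  have GGpos: "0 \<le> QF (matfun (\<lambda>s. G s - G' s) M2) v"
  proof (rule mf_psd[OF h2], rule ballI)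
    fix l assume l: "l \<in> mspec M2"
    show "0 \<le> G (Re l) - G' (Re l)"
    proof (cases "Re l > 0")
      case True
      hence Fp: "F (Re l) > 0" by (rule Fpos)
      have "F (Re l) * G (Re l) = Re l" using FG True by auto
      hence "G' (Re l) = G (Re l)" using True Fp
        by (simp add: G'_def chf_def field_simps)
      thus ?thesis by simp
    next
      case False
      hence "Re l = 0" using s2 l by force
      thus ?thesis using FG by (simp add: G'_def chf_def)
    qed
  qed
  have q1: "QF (matfun F M1) u = (norm (Ph *v u))^2"
    using PhiPhi QF_mult_adj[of Ph u] hPhi by simp
  have q2: "cinner v (T *v u) = cinner (Y *v v) (Ph *v u)"
    by (subst Tf) (simp add: matrix_vector_mul_assoc[symmetric] cinner_adj)
  have q3: "QF (matfun G M2) v = (norm (Y *v v))^2 + QF (matfun (\<lambda>s. G s - G' s) M2) v"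
    by (simp add: GG QF_add QF_mult_adj)
  have "0 \<le> (norm (Ph *v u + Y *v v))^2" by simp
  also have "\<dots> = QF (matfun F M1) u + 2 * Re (cinner v (T *v u)) + (norm (Y *v v))^2"
    by (simp add: norm_add_sq q1 q2)
  finally show ?thesis using q3 GGpos unfolding M1_def M2_def by simp
qed



definition blk :: "complex^'n^'n \<Rightarrow> complex^'n^'n \<Rightarrow> complex^'n^'n \<Rightarrow> bool" where
  "blk A B X \<longleftrightarrow> (\<forall>u v. 0 \<le> QF A u + 2 * Re (cinner v (X *v u)) + QF B v)"

lemma herm_mult3: "herm C \<Longrightarrow> herm B \<Longrightarrow> herm (C ** B ** C)"
  by (simp add: herm_def cadj_mult matrix_mul_assoc)

lemma QF_congr: "herm C \<Longrightarrow> QF (C ** B ** C) x = QF B (C *v x)"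
  by (simp add: QF_def matrix_vector_mul_assoc[symmetric] herm_cinner)

lemma cinner_congr: "herm C \<Longrightarrow> cinner v ((C ** B ** C) *v u) = cinner (C *v v) (B *v (C *v u))"
  by (simp add: matrix_vector_mul_assoc[symmetric] herm_cinner)

lemma QF_herm_sq: "herm R \<Longrightarrow> QF (R ** R) x = (norm (R *v x))^2"
  by (metis QF_mult_adj herm_def)

lemma mv_neg: "(A::complex^'n^'m) *v (- x) = - (A *v x)"
  by (simp add: matrix_vector_mult_def vec_eq_iff sum_negf)

lemma sqrt_mono:
  assumes hY: "herm Y" and hR: "herm R" and Rp: "\<forall>x. 0 \<le> QF R x"
    and sq: "\<forall>x. QF (Y ** Y) x \<le> QF (R ** R) x"
  shows "QF Y w \<le> QF R w"
proof -
  have hD: "herm (Y - R)" by (rule herm_diff[OF hY hR])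
  have "csub (UNIV :: (complex^'n) set)" by (simp add: csub_def)
  from rayleigh[OF hD this] obtain x \<mu> where x: "x \<noteq> 0" "(Y - R) *v x = complex_of_real \<mu> *s x"
    and bnd: "\<forall>y. QF (Y - R) y \<le> \<mu> * (norm y)^2"
    by (metis UNIV_I ex_in_conv zero_neq_one vec_eq_iff zero_index one_index)
  show ?thesis
  proof (cases "\<mu> \<le> 0")
    case True
    have "QF Y w - QF R w \<le> \<mu> * (norm w)^2" using bnd by (simp add: QF_diff)
    also have "\<dots> \<le> 0" using True by (simp add: mult_nonpos_nonneg)
    finally show ?thesis by simp
  next
    case False
    have Yx: "Y *v x = R *v x + complex_of_real \<mu> *s x"
      using x(2) by (simp add: matrix_vector_mult_diff_rdistrib algebra_simps)
    have e1: "cinner x ((Y ** Y) *v x) = cinner x ((Y ** R) *v x) + complex_of_real \<mu> * cinner x (Y *v x)"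
      by (simp add: matrix_vector_mul_assoc[symmetric] Yx matrix_vector_right_distrib mv_smult
          cinner_add_right cinner_scale_right) (simp add: algebra_simps)
    have e2: "cinner x ((Y ** R) *v x) = cinner x ((R ** R) *v x) + complex_of_real \<mu> * cinner x (R *v x)"
    proof -
      have "cinner x ((Y ** R) *v x) = cinner (Y *v x) (R *v x)"
        by (simp add: matrix_vector_mul_assoc[symmetric] herm_cinner[OF hY])
      also have "\<dots> = cinner (R *v x) (R *v x) + complex_of_real \<mu> * cinner x (R *v x)"
        by (simp add: Yx cinner_add_left cinner_scale_left)
      also have "cinner (R *v x) (R *v x) = cinner x ((R ** R) *v x)"
        by (simp add: matrix_vector_mul_assoc[symmetric] herm_cinner[OF hR])
      finally show ?thesis .
    qed
    have e3: "cinner x (Y *v x) = cinner x (R *v x) + complex_of_real \<mu> * cinner x x"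
      by (simp add: Yx cinner_add_right cinner_scale_right)
    have "QF (Y ** Y) x = QF (R ** R) x + \<mu> * (\<mu> * (norm x)^2 + 2 * QF R x)"
      unfolding QF_def using e1 e2 e3 by (simp add: cinner_self algebra_simps)
    moreover have "\<mu> * (\<mu> * (norm x)^2 + 2 * QF R x) > 0"
      using False x(1) Rp by (intro mult_pos_pos) (auto intro!: add_pos_nonneg)
    ultimately show ?thesis using sq by (metis add.right_neutral add_less_cancel_left not_le)
  qed
qed

lemma gm_pd:
  assumes hA: "herm A" and hB: "herm B" and sA: "\<forall>l\<in>mspec A. 0 < Re l"
    and sB: "\<forall>l\<in>mspec B. 0 \<le> Re l"
  shows "herm (gmean_pd A B)" "blk A B (gmean_pd A B)"
    "\<And>X. herm X \<Longrightarrow> blk A B X \<Longrightarrow> QF X w \<le> QF (gmean_pd A B) w"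
proof -
  define S where "S = matfun sqrt A"
  define C where "C = matfun (\<lambda>t. inverse (sqrt t)) A"
  define M where "M = C ** B ** C"
  define R where "R = matfun sqrt M"
  have hS: "herm S" unfolding S_def by (rule mf_herm[OF hA])
  have hC: "herm C" unfolding C_def by (rule mf_herm[OF hA])
  have hM: "herm M" unfolding M_def by (rule herm_mult3[OF hC hB])
  have hR: "herm R" unfolding R_def by (rule mf_herm[OF hM])
  have G: "gmean_pd A B = S ** R ** S" unfolding gmean_pd_def S_def R_def M_def C_def ..
  have Bp: "0 \<le> QF B x" for x
    using mf_psd[OF hB, of "\<lambda>t. t"] sB mf_id[OF hB] by simp
  have Mp: "0 \<le> QF M x" for x unfolding M_def QF_congr[OF hC] by (rule Bp)
  have sM: "\<forall>l\<in>mspec M. 0 \<le> Re l" using psd_spec[OF hM] Mp by blast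
  have RR: "R ** R = M"
  proof -
    have "R ** R = matfun (\<lambda>t. sqrt t * sqrt t) M" unfolding R_def by (rule mf_mult[OF hM])
    also have "\<dots> = matfun (\<lambda>t. t) M" using sM by (intro mf_cong[OF hM]) auto
    finally show ?thesis by (simp add: mf_id[OF hM])
  qed
  have Rp: "\<forall>x. 0 \<le> QF R x" unfolding R_def using sM by (intro allI mf_psd[OF hM]) auto
  have SC: "S ** C = mat 1"
  proof -
    have "S ** C = matfun (\<lambda>t. sqrt t * inverse (sqrt t)) A" unfolding S_def C_def by (rule mf_mult[OF hA])
    also have "\<dots> = matfun (\<lambda>t. 1) A" using sA by (intro mf_cong[OF hA]) auto
    finally show ?thesis by (simp add: mf_const[OF hA])
  qed
  have CS: "C ** S = mat 1"
  proof -
    have "C ** S = matfun (\<lambda>t. inverse (sqrt t) * sqrt t) A" unfolding S_def C_def by (rule mf_mult[OF hA])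
    also have "\<dots> = matfun (\<lambda>t. 1) A" using sA by (intro mf_cong[OF hA]) auto
    finally show ?thesis by (simp add: mf_const[OF hA])
  qed
  have CAC: "C ** A ** C = mat 1"
  proof -
    have "C ** A ** C = matfun (\<lambda>t. inverse (sqrt t) * t * inverse (sqrt t)) A"
      unfolding C_def
      by (subst (2) mf_id[OF hA, symmetric]) (simp add: mf_mult[OF hA])
    also have "\<dots> = matfun (\<lambda>t. 1) A" using sA
      by (intro mf_cong[OF hA]) (auto simp: field_simps)
    finally show ?thesis by (simp add: mf_const[OF hA])
  qed
  have QA: "QF A (C *v u) = (norm u)^2" for u
    using QF_congr[OF hC, of A u] CAC by (simp add: QF_def cinner_self)
  show "herm (gmean_pd A B)" unfolding G by (rule herm_mult3[OF hS hR])
  show "blk A B (gmean_pd A B)" unfolding blk_def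
  proof (intro allI)
    fix u v
    define u' where "u' = S *v u"
    define v' where "v' = S *v v"
    have uu: "u = C *v u'" by (simp add: u'_def matrix_vector_mul_assoc CS)
    have vv: "v = C *v v'" by (simp add: v'_def matrix_vector_mul_assoc CS)
    have "QF A u = (norm u')^2" unfolding uu by (rule QA)
    moreover have "cinner v (gmean_pd A B *v u) = cinner (R *v v') u'"
      unfolding G cinner_congr[OF hS] u'_def v'_def by (rule herm_cinner[OF hR])
    moreover have "QF B v = (norm (R *v v'))^2"
      unfolding vv QF_congr[OF hC, symmetric] M_def[symmetric] RR[symmetric] by (rule QF_herm_sq[OF hR])
    ultimately have "QF A u + 2 * Re (cinner v (gmean_pd A B *v u)) + QF B v = (norm (u' + R *v v'))^2"
      by (simp add: norm_add_sq)
    thus "0 \<le> QF A u + 2 * Re (cinner v (gmean_pd A B *v u)) + QF B v" by simp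
  qed
  fix X assume hX: "herm X" and bX: "blk A B X"
  define Y where "Y = C ** X ** C"
  have hY: "herm Y" unfolding Y_def by (rule herm_mult3[OF hC hX])
  have nb: "0 \<le> (norm u)^2 + 2 * Re (cinner v (Y *v u)) + QF M v" for u v
  proof -
    have "0 \<le> QF A (C *v u) + 2 * Re (cinner (C *v v) (X *v (C *v u))) + QF B (C *v v)"
      using bX unfolding blk_def by blast
    thus ?thesis unfolding QA Y_def M_def cinner_congr[OF hC] QF_congr[OF hC] .
  qed
  have YY: "QF (Y ** Y) x \<le> QF (R ** R) x" for x
  proof -
    have "0 \<le> (norm (- (Y *v x)))^2 + 2 * Re (cinner x (Y *v (- (Y *v x)))) + QF M x" by (rule nb)
    moreover have "cinner x (Y *v (- (Y *v x))) = - cinner (Y *v x) (Y *v x)"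
      by (simp add: mv_neg cinner_minus_right herm_cinner[OF hY])
    ultimately have "(norm (Y *v x))^2 \<le> QF M x" by (simp add: cinner_self)
    thus ?thesis by (simp add: QF_herm_sq[OF hY] RR)
  qed
  have XY: "X = S ** Y ** S"
  proof -
    have "S ** Y ** S = (S ** C) ** X ** (C ** S)" by (simp add: Y_def matrix_mul_assoc)
    thus ?thesis by (simp add: SC CS)
  qed
  have "QF X w = QF Y (S *v w)" unfolding XY by (rule QF_congr[OF hS])
  also have "\<dots> \<le> QF R (S *v w)" by (rule sqrt_mono[OF hY hR Rp]) (use YY in blast)
  also have "\<dots> = QF (gmean_pd A B) w" unfolding G by (rule QF_congr[OF hS, symmetric])
  finally show "QF X w \<le> QF (gmean_pd A B) w" .
qed



lemma spec_lower:
  assumes H: "herm H" and pos: "\<forall>x. c * (norm x)^2 \<le> QF H x" and l: "l \<in> mspec H"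
  shows "c \<le> Re l"
proof -
  from l obtain v where v: "v \<noteq> 0" "H *v v = l *s v" unfolding mspec_def by blast
  have "QF H v = Re (l * complex_of_real ((norm v)^2))"
    by (simp add: QF_def v(2) cinner_scale_right cinner_self)
  also have "\<dots> = Re l * (norm v)^2" by simp
  finally have "c * (norm v)^2 \<le> Re l * (norm v)^2" using pos by metis
  moreover have "(norm v)^2 > 0" using v by simp
  ultimately show ?thesis by simp
qed

lemma blk_mono:
  assumes "blk A B X" "\<forall>u. QF A u \<le> QF A' u" "\<forall>v. QF B v \<le> QF B' v"
  shows "blk A' B' X"
  using assms unfolding blk_def by (meson add_mono order_trans order_refl)

lemma QF_id: "QF (mat 1) u = (norm u)^2"
  by (simp add: QF_def cinner_self)

lemma QF_shift: "QF (A + e *\<^sub>R mat 1) u = QF A u + e * (norm u)^2"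
  by (simp add: QF_add QF_scaleR QF_id)

lemma herm_shift: "herm A \<Longrightarrow> herm (A + e *\<^sub>R mat 1)"
  by (intro herm_add herm_scaleR herm_mat) auto

lemma entry_cinner: "M $ i $ j = cinner (axis i 1) (M *v axis j 1)"
  by (simp add: cinner_def matrix_vector_mult_def axis_def if_distrib if_distribR sum.delta cong: if_cong)

lemma qexp: "cinner (a + c *s b) (M *v (a + c *s b)) =
   cinner a (M *v a) + c * cinner a (M *v b) + cnj c * cinner b (M *v a) + cnj c * c * cinner b (M *v b)"
  by (simp add: matrix_vector_right_distrib mv_smult cinner_add_left cinner_add_right
      cinner_scale_left cinner_scale_right algebra_simps)

lemma polar: "cinner a (M *v b) = (cinner (a + 1 *s b) (M *v (a + 1 *s b)) - cinner (a + (-1) *s b) (M *v (a + (-1) *s b))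
   - \<i> * cinner (a + \<i> *s b) (M *v (a + \<i> *s b)) + \<i> * cinner (a + (-\<i>) *s b) (M *v (a + (-\<i>) *s b))) / 4"
  unfolding qexp by (simp add: algebra_simps)

lemma cinner_tendsto:
  assumes "(G \<longlongrightarrow> L) F"
  shows "((\<lambda>e. cinner w (G e *v w)) \<longlongrightarrow> cinner w (L *v w)) F"
  unfolding cinner_def matrix_vector_mult_def using assms
  by (auto intro!: tendsto_intros)

lemma gm_main:
  fixes A B X :: "complex^'n^'n"
  assumes hA: "herm A" and hB: "herm B" and pA: "\<forall>x. 0 \<le> QF A x" and pB: "\<forall>x. 0 \<le> QF B x"
    and hX: "herm X" and bX: "blk A B X"
  shows "loewner_le X (gmean A B)"
proof -
  define G where "G e = gmean_pd (A + e *\<^sub>R mat 1) (B + e *\<^sub>R mat 1)" for e :: real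
  have hAe: "herm (A + e *\<^sub>R mat 1)" for e using herm_shift[OF hA] .
  have hBe: "herm (B + e *\<^sub>R mat 1)" for e using herm_shift[OF hB] .
  have sAe: "\<forall>l\<in>mspec (A + e *\<^sub>R mat 1). 0 < Re l" if "e > 0" for e
  proof
    fix l assume "l \<in> mspec (A + e *\<^sub>R mat 1)"
    moreover have "\<forall>x. e * (norm x)^2 \<le> QF (A + e *\<^sub>R mat 1) x" using pA by (simp add: QF_shift)
    ultimately have "e \<le> Re l" using spec_lower[OF hAe] by blast
    thus "0 < Re l" using that by simp
  qed
  have sBe: "\<forall>l\<in>mspec (B + e *\<^sub>R mat 1). 0 \<le> Re l" if "e > 0" for e
  proof
    fix l assume "l \<in> mspec (B + e *\<^sub>R mat 1)"
    moreover have "\<forall>x. e * (norm x)^2 \<le> QF (B + e *\<^sub>R mat 1) x" using pB by (simp add: QF_shift)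
    ultimately have "e \<le> Re l" using spec_lower[OF hBe] by blast
    thus "0 \<le> Re l" using that by simp
  qed
  have hG: "herm (G e)" if "e > 0" for e
    unfolding G_def by (rule gm_pd(1)[OF hAe hBe sAe[OF that] sBe[OF that]])
  have bG: "blk (A + e *\<^sub>R mat 1) (B + e *\<^sub>R mat 1) (G e)" if "e > 0" for e
    unfolding G_def by (rule gm_pd(2)[OF hAe hBe sAe[OF that] sBe[OF that]])
  have lowG: "QF X w \<le> QF (G e) w" if "e > 0" for e w
  proof -
    have "blk (A + e *\<^sub>R mat 1) (B + e *\<^sub>R mat 1) X"
      using that by (intro blk_mono[OF bX]) (auto simp: QF_shift)
    thus ?thesis unfolding G_def by (rule gm_pd(3)[OF hAe hBe sAe[OF that] sBe[OF that] hX])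
  qed
  have monoG: "QF (G e') w \<le> QF (G e) w" if "0 < e'" "e' \<le> e" for e e' w
  proof -
    have e0: "0 < e" using that by simp
    have "blk (A + e *\<^sub>R mat 1) (B + e *\<^sub>R mat 1) (G e')"
      using that by (intro blk_mono[OF bG[OF that(1)]]) (auto simp: QF_shift intro!: mult_right_mono)
    thus ?thesis unfolding G_def
      by (rule gm_pd(3)[OF hAe hBe sAe[OF e0] sBe[OF e0] hG[OF that(1), unfolded G_def]])
  qed
  have conv: "\<exists>c. ((\<lambda>e. cinner w (G e *v w)) \<longlongrightarrow> c) (at_right 0)" for w
  proof -
    have "((\<lambda>e. QF (G e) w) \<longlongrightarrow> Inf ((\<lambda>e. QF (G e) w) ` ({0<..} \<inter> UNIV))) (at 0 within ({0<..} \<inter> UNIV))"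
      by (rule Lim_right_bound[where K = "QF X w"]) (auto intro: monoG lowG)
    hence "((\<lambda>e. QF (G e) w) \<longlongrightarrow> Inf ((\<lambda>e. QF (G e) w) ` {0<..})) (at_right 0)" by simp
    hence "((\<lambda>e. complex_of_real (QF (G e) w)) \<longlongrightarrow> complex_of_real (Inf ((\<lambda>e. QF (G e) w) ` {0<..}))) (at_right 0)"
      by (rule tendsto_of_real)
    moreover have "eventually (\<lambda>e. complex_of_real (QF (G e) w) = cinner w (G e *v w)) (at_right 0)"
      using eventually_at_right_less[of 0]
    proof (rule eventually_mono)
      fix e :: real assume "0 < e"
      hence "Im (cinner w (G e *v w)) = 0" by (intro herm_Im hG)
      thus "complex_of_real (QF (G e) w) = cinner w (G e *v w)" by (simp add: QF_def complex_eq_iff)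
    qed
    ultimately show ?thesis by (blast intro: Lim_transform_eventually)
  qed
  have entries: "\<exists>c. ((\<lambda>e. G e $ i $ j) \<longlongrightarrow> c) (at_right 0)" for i j
  proof -
    define a :: "complex^'n" where "a = axis i 1"
    define b :: "complex^'n" where "b = axis j 1"
    obtain c1 where c1: "((\<lambda>e. cinner (a + 1 *s b) (G e *v (a + 1 *s b))) \<longlongrightarrow> c1) (at_right 0)"
      using conv by blast
    obtain c2 where c2: "((\<lambda>e. cinner (a + (-1) *s b) (G e *v (a + (-1) *s b))) \<longlongrightarrow> c2) (at_right 0)"
      using conv by blast
    obtain c3 where c3: "((\<lambda>e. cinner (a + \<i> *s b) (G e *v (a + \<i> *s b))) \<longlongrightarrow> c3) (at_right 0)"
      using conv by blast
    obtain c4 where c4: "((\<lambda>e. cinner (a + (-\<i>) *s b) (G e *v (a + (-\<i>) *s b))) \<longlongrightarrow> c4) (at_right 0)"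
      using conv by blast
    have "((\<lambda>e. (cinner (a + 1 *s b) (G e *v (a + 1 *s b)) - cinner (a + (-1) *s b) (G e *v (a + (-1) *s b))
       - \<i> * cinner (a + \<i> *s b) (G e *v (a + \<i> *s b)) + \<i> * cinner (a + (-\<i>) *s b) (G e *v (a + (-\<i>) *s b))) / 4)
       \<longlongrightarrow> (c1 - c2 - \<i> * c3 + \<i> * c4) / 4) (at_right 0)"
      by (intro tendsto_intros c1 c2 c3 c4) simp
    hence "((\<lambda>e. G e $ i $ j) \<longlongrightarrow> (c1 - c2 - \<i> * c3 + \<i> * c4) / 4) (at_right 0)"
      unfolding entry_cinner[of "G _" i j] a_def[symmetric] b_def[symmetric] polar[of a "G _" b, symmetric] .
    thus ?thesis by blast
  qed
  define c where "c i j = (SOME c. ((\<lambda>e. G e $ i $ j) \<longlongrightarrow> c) (at_right 0))" for i j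
  have c: "((\<lambda>e. G e $ i $ j) \<longlongrightarrow> c i j) (at_right 0)" for i j
    unfolding c_def by (rule someI_ex[OF entries])
  define L where "L = (\<chi> i j. c i j)"
  have GL: "(G \<longlongrightarrow> L) (at_right 0)"
    by (rule vec_tendstoI, rule vec_tendstoI) (simp add: L_def c)
  have gm: "gmean A B = L"
    unfolding gmean_def G_def[symmetric] by (rule tendsto_Lim[OF trivial_limit_at_right_real GL])
  show ?thesis unfolding loewner_le_def psd_iff gm
  proof (intro allI conjI)
    fix w
    have lim: "((\<lambda>e. cinner w (G e *v w)) \<longlongrightarrow> cinner w (L *v w)) (at_right 0)"
      by (rule cinner_tendsto[OF GL])
    have ev: "eventually (\<lambda>e. Im (cinner w (G e *v w)) = 0 \<and> QF X w \<le> Re (cinner w (G e *v w))) (at_right 0)"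
      using eventually_at_right_less[of 0]
    proof (rule eventually_mono)
      fix e :: real assume "0 < e"
      thus "Im (cinner w (G e *v w)) = 0 \<and> QF X w \<le> Re (cinner w (G e *v w))"
        using herm_Im[OF hG[OF \<open>0 < e\<close>]] lowG[OF \<open>0 < e\<close>, of w] unfolding QF_def by simp
    qed
    have limIm: "((\<lambda>e. Im (cinner w (G e *v w))) \<longlongrightarrow> Im (cinner w (L *v w))) (at_right 0)"
      by (rule tendsto_Im[OF lim])
    have "((\<lambda>e. Im (cinner w (G e *v w))) \<longlongrightarrow> 0) (at_right 0)"
      by (rule Lim_transform_eventually[OF tendsto_const]) (use ev in \<open>auto elim: eventually_mono\<close>)
    hence ImL: "Im (cinner w (L *v w)) = 0"
      using tendsto_unique[OF trivial_limit_at_right_real limIm] by blast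
    have "QF X w \<le> Re (cinner w (L *v w))"
      by (rule tendsto_lowerbound[OF tendsto_Re[OF lim]]) (use ev in \<open>auto elim: eventually_mono\<close>)
    hence "0 \<le> QF L w - QF X w" by (simp add: QF_def)
    thus "0 \<le> QF (L - X) w" by (simp add: QF_diff)
    show "Im (cinner w ((L - X) *v w)) = 0"
      using ImL herm_Im[OF hX] by (simp add: matrix_vector_mult_diff_rdistrib cinner_diff_right)
  qed
qed



lemma re_part_eq: "re_part T = (1/2) *\<^sub>R (T + cadj T)"
  by (simp add: re_part_def cadj_def vec_eq_iff mat_scaleR_nth del: vector_scaleR_component)

lemma herm_re_part: "herm (re_part T)"
  unfolding re_part_eq by (intro herm_scaleR) (simp add: herm_def cadj_add add.commute)

lemma cinner_re_part: "Re (cinner v (re_part T *v u)) = (Re (cinner v (T *v u)) + Re (cinner v (cadj T *v u))) / 2"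
  by (simp add: re_part_eq mv_scaleR cinner_scaleR_right matrix_vector_mult_add_rdistrib cinner_add_right)

lemma blk_re:
  fixes T :: "complex^'n^'n"
  assumes FG: "\<forall>s\<ge>0. 0 \<le> F s \<and> 0 \<le> G s \<and> F s * G s = s"
  shows "blk ((1/2) *\<^sub>R (matfun F (cadj T ** T) + matfun F (T ** cadj T)))
             ((1/2) *\<^sub>R (matfun G (cadj T ** T) + matfun G (T ** cadj T))) (re_part T)"
  unfolding blk_def
proof (intro allI)
  fix u v
  have b1: "0 \<le> QF (matfun F (cadj T ** T)) u + 2 * Re (cinner v (T *v u)) + QF (matfun G (T ** cadj T)) v"
    by (rule block[OF FG])
  have b2: "0 \<le> QF (matfun F (T ** cadj T)) u + 2 * Re (cinner v (cadj T *v u)) + QF (matfun G (cadj T ** T)) v"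
    using block[OF FG, of "cadj T" u v] by simp
  show "0 \<le> QF ((1/2) *\<^sub>R (matfun F (cadj T ** T) + matfun F (T ** cadj T))) u
      + 2 * Re (cinner v (re_part T *v u))
      + QF ((1/2) *\<^sub>R (matfun G (cadj T ** T) + matfun G (T ** cadj T))) v"
    unfolding QF_scaleR QF_add cinner_re_part using add_nonneg_nonneg[OF b1 b2] by argo
qed

lemma blk_neg: "blk A B X \<Longrightarrow> blk A B (- X)"
  unfolding blk_def
proof (intro allI)
  fix u v assume b: "\<forall>u v. 0 \<le> QF A u + 2 * Re (cinner v (X *v u)) + QF B v"
  have "0 \<le> QF A u + 2 * Re (cinner (- v) (X *v u)) + QF B (- v)" using b by blast
  moreover have "QF B (- v) = QF B v" by (simp add: QF_def mv_neg cinner_minus_left cinner_minus_right)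
  moreover have "(- X) *v u = - (X *v u)" by (simp add: matrix_vector_mult_def vec_eq_iff sum_negf)
  ultimately show "0 \<le> QF A u + 2 * Re (cinner v ((- X) *v u)) + QF B v"
    by (simp add: cinner_minus_left cinner_minus_right)
qed

lemma blk_diag:
  assumes hX: "herm X" and hP: "herm P" and b: "blk P P X"
  shows "loewner_le X P"
  unfolding loewner_le_def psd_herm_iff[OF herm_diff[OF hP hX]]
proof
  fix w
  have "0 \<le> QF P w + 2 * Re (cinner (- w) (X *v w)) + QF P (- w)" using b unfolding blk_def by blast
  moreover have "QF P (- w) = QF P w" by (simp add: QF_def mv_neg cinner_minus_left cinner_minus_right)
  moreover have "Re (cinner (- w) (X *v w)) = - QF X w" by (simp add: QF_def cinner_minus_left)
  ultimately have "0 \<le> 2 * QF P w - 2 * QF X w" by linarith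
  thus "0 \<le> QF (P - X) w" by (simp add: QF_diff)
qed

definition smat :: "complex \<Rightarrow> complex^'n^'m \<Rightarrow> complex^'n^'m" where
  "smat c T = (\<chi> i j. c * T $ i $ j)"

lemma cadj_smat: "cadj (smat c T) = smat (cnj c) (cadj T)"
  by (simp add: smat_def cadj_def vec_eq_iff)

lemma smat_mult: "smat a X ** smat b Y = smat (a * b) (X ** Y)"
  by (simp add: smat_def matrix_matrix_mult_def vec_eq_iff sum_distrib_left mult_ac)

lemma smat_1: "smat 1 X = X"
  by (simp add: smat_def vec_eq_iff)

lemma im_part_eq: "im_part T = re_part (smat (- \<i>) T)"
  by (simp add: im_part_def re_part_def smat_def vec_eq_iff field_simps)

lemma M1_rot: "cadj (smat (- \<i>) T) ** smat (- \<i>) T = cadj T ** T"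
  by (simp add: cadj_smat smat_mult smat_1)

lemma M2_rot: "smat (- \<i>) T ** cadj (smat (- \<i>) T) = T ** cadj T"
  by (simp add: cadj_smat smat_mult smat_1)

lemma gm_re:
  fixes T :: "complex^'n^'n"
  assumes FG: "\<forall>s\<ge>0. 0 \<le> F s \<and> 0 \<le> G s \<and> F s * G s = s"
  defines "A \<equiv> (1/2) *\<^sub>R (matfun F (cadj T ** T) + matfun F (T ** cadj T))"
    and "B \<equiv> (1/2) *\<^sub>R (matfun G (cadj T ** T) + matfun G (T ** cadj T))"
  shows "loewner_le (re_part T) (gmean A B) \<and> loewner_le (- re_part T) (gmean A B)"
proof -
  have h1: "herm (cadj T ** T)" and h2: "herm (T ** cadj T)" by (rule herm_AA, rule herm_AA')
  have hA: "herm A" unfolding A_def by (intro herm_scaleR herm_add mf_herm h1 h2)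
  have hB: "herm B" unfolding B_def by (intro herm_scaleR herm_add mf_herm h1 h2)
  have pA: "\<forall>x. 0 \<le> QF A x"
  proof
    fix x
    have "0 \<le> QF (matfun F (cadj T ** T)) x" using FG spec_AA by (intro mf_psd[OF h1]) auto
    moreover have "0 \<le> QF (matfun F (T ** cadj T)) x" using FG spec_AA' by (intro mf_psd[OF h2]) auto
    ultimately show "0 \<le> QF A x" by (simp add: A_def QF_scaleR QF_add)
  qed
  have pB: "\<forall>x. 0 \<le> QF B x"
  proof
    fix x
    have "0 \<le> QF (matfun G (cadj T ** T)) x" using FG spec_AA by (intro mf_psd[OF h1]) auto
    moreover have "0 \<le> QF (matfun G (T ** cadj T)) x" using FG spec_AA' by (intro mf_psd[OF h2]) auto
    ultimately show "0 \<le> QF B x" by (simp add: B_def QF_scaleR QF_add)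
  qed
  have b: "blk A B (re_part T)" unfolding A_def B_def by (rule blk_re[OF FG])
  show ?thesis
    using gm_main[OF hA hB pA pB herm_re_part b]
      gm_main[OF hA hB pA pB herm_uminus[OF herm_re_part] blk_neg[OF b]] by blast
qed

lemma diag_re:
  fixes T :: "complex^'n^'n"
  defines "P \<equiv> (1/2) *\<^sub>R (mabs T + mabs (cadj T))"
  shows "loewner_le (re_part T) P \<and> loewner_le (- re_part T) P"
proof -
  have FG: "\<forall>s\<ge>0. 0 \<le> sqrt s \<and> 0 \<le> sqrt s \<and> sqrt s * sqrt s = s" by simp
  have e: "P = (1/2) *\<^sub>R (matfun sqrt (cadj T ** T) + matfun sqrt (T ** cadj T))"
    by (simp add: P_def mabs_def)
  have hP: "herm P" unfolding e by (intro herm_scaleR herm_add mf_herm herm_AA herm_AA')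
  have b: "blk P P (re_part T)" unfolding e by (rule blk_re[OF FG])
  show ?thesis using blk_diag[OF herm_re_part hP b] blk_diag[OF herm_uminus[OF herm_re_part] hP blk_neg[OF b]]
    by blast
qed

theorem mainTheorem16:
  fixes T :: "complex^'n^'n" and f g :: "real \<Rightarrow> real"
  assumes "continuous_on {0..} f" and "continuous_on {0..} g"
    and "\<forall>t\<ge>0. f t \<ge> 0" and "\<forall>t\<ge>0. g t \<ge> 0"
    and "\<forall>t\<ge>0. f t * g t = t"
  shows "loewner_le (re_part T)
           (gmean ((1/2) *\<^sub>R (matfun (\<lambda>t. (f t)^2) (mabs T) + matfun (\<lambda>t. (f t)^2) (mabs (cadj T))))
                  ((1/2) *\<^sub>R (matfun (\<lambda>t. (g t)^2) (mabs T) + matfun (\<lambda>t. (g t)^2) (mabs (cadj T)))))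
       \<and> loewner_le (- re_part T)
           (gmean ((1/2) *\<^sub>R (matfun (\<lambda>t. (f t)^2) (mabs T) + matfun (\<lambda>t. (f t)^2) (mabs (cadj T))))
                  ((1/2) *\<^sub>R (matfun (\<lambda>t. (g t)^2) (mabs T) + matfun (\<lambda>t. (g t)^2) (mabs (cadj T)))))
       \<and> loewner_le (im_part T)
           (gmean ((1/2) *\<^sub>R (matfun (\<lambda>t. (f t)^2) (mabs T) + matfun (\<lambda>t. (f t)^2) (mabs (cadj T))))
                  ((1/2) *\<^sub>R (matfun (\<lambda>t. (g t)^2) (mabs T) + matfun (\<lambda>t. (g t)^2) (mabs (cadj T)))))
       \<and> loewner_le (- im_part T)
           (gmean ((1/2) *\<^sub>R (matfun (\<lambda>t. (f t)^2) (mabs T) + matfun (\<lambda>t. (f t)^2) (mabs (cadj T))))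
                  ((1/2) *\<^sub>R (matfun (\<lambda>t. (g t)^2) (mabs T) + matfun (\<lambda>t. (g t)^2) (mabs (cadj T)))))
       \<and> loewner_le (re_part T) ((1/2) *\<^sub>R (mabs T + mabs (cadj T)))
       \<and> loewner_le (- re_part T) ((1/2) *\<^sub>R (mabs T + mabs (cadj T)))
       \<and> loewner_le (im_part T) ((1/2) *\<^sub>R (mabs T + mabs (cadj T)))
       \<and> loewner_le (- im_part T) ((1/2) *\<^sub>R (mabs T + mabs (cadj T)))"
proof -
  define F where "F s = (f (sqrt s))^2" for s
  define G where "G s = (g (sqrt s))^2" for s
  have FG: "\<forall>s\<ge>0. 0 \<le> F s \<and> 0 \<le> G s \<and> F s * G s = s"
  proof (intro allI impI conjI)
    fix s :: real assume s: "0 \<le> s"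
    show "0 \<le> F s" "0 \<le> G s" by (simp_all add: F_def G_def)
    have "f (sqrt s) * g (sqrt s) = sqrt s" using assms(5) s by simp
    hence "F s * G s = (sqrt s)^2" by (simp add: F_def G_def power_mult_distrib[symmetric])
    thus "F s * G s = s" using s by simp
  qed
  have ef: "matfun (\<lambda>t. (f t)^2) (mabs X) = matfun F (cadj X ** X)" for X :: "complex^'n^'n"
    unfolding mabs_def F_def by (rule mf_comp[OF herm_AA])
  have eg: "matfun (\<lambda>t. (g t)^2) (mabs X) = matfun G (cadj X ** X)" for X :: "complex^'n^'n"
    unfolding mabs_def G_def by (rule mf_comp[OF herm_AA])
  define A where "A = (1/2) *\<^sub>R (matfun F (cadj T ** T) + matfun F (T ** cadj T))"
  define B where "B = (1/2) *\<^sub>R (matfun G (cadj T ** T) + matfun G (T ** cadj T))"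
  have eA: "(1/2) *\<^sub>R (matfun (\<lambda>t. (f t)^2) (mabs T) + matfun (\<lambda>t. (f t)^2) (mabs (cadj T))) = A"
    unfolding A_def ef by simp
  have eB: "(1/2) *\<^sub>R (matfun (\<lambda>t. (g t)^2) (mabs T) + matfun (\<lambda>t. (g t)^2) (mabs (cadj T))) = B"
    unfolding B_def eg by simp
  have r1: "loewner_le (re_part T) (gmean A B) \<and> loewner_le (- re_part T) (gmean A B)"
    unfolding A_def B_def by (rule gm_re[OF FG])
  have r2: "loewner_le (im_part T) (gmean A B) \<and> loewner_le (- im_part T) (gmean A B)"
    using gm_re[OF FG, of "smat (- \<i>) T"] unfolding A_def B_def im_part_eq M1_rot M2_rot .
  have r3: "loewner_le (re_part T) ((1/2) *\<^sub>R (mabs T + mabs (cadj T)))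
      \<and> loewner_le (- re_part T) ((1/2) *\<^sub>R (mabs T + mabs (cadj T)))"
    by (rule diag_re)
  have r4: "loewner_le (im_part T) ((1/2) *\<^sub>R (mabs T + mabs (cadj T)))
      \<and> loewner_le (- im_part T) ((1/2) *\<^sub>R (mabs T + mabs (cadj T)))"
  proof -
    have "mabs (smat (- \<i>) T) = mabs T" by (simp add: mabs_def M1_rot)
    moreover have "mabs (cadj (smat (- \<i>) T)) = mabs (cadj T)"
      by (simp add: mabs_def M2_rot)
    ultimately show ?thesis using diag_re[of "smat (- \<i>) T"] unfolding im_part_eq by simp
  qed
  show ?thesis unfolding eA eB using r1 r2 r3 r4 by blast
qed


end
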